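(* Assume Hypotheses (H1) and (H2) below. There are constants $\eta,C,L_0>0$ such that the following holds for each $L\geq L_0$. Fix $\lambda\in\bar\Omega$. Then, successively for $j=1,\ldots,r$, the linear boundary-value problem \begin{align*} &V_x=(A(x,\lambda)-\nu^+_j(\lambda)\mathbb{I})V \quad\text{on } 0<x<L,\\ &\langle V^+_{L,k}(0,\lambda),V(0)\rangle=0 \quad\text{for } k=1,\ldots,j-1,\\ &\langle W^+_j(\lambda),V(L)\rangle=\langle W^+_j(\lambda),V^+_j(\lambda)\rangle,\\ &\langle W^+_k(\lambda),V(L)\rangle=0 \quad\text{for } k=j+1,\ldots,n, \end{align*} where $V^+_{L,k}(\cdot,\lambda)$, $k<j$, denote the solutions obtained at the previous steps, has a unique solution $V(x)=V^+_{L,j}(x,\lambda)$ for $x\in[0,L]$.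
   Context: Consider the linear system $U_x=A(x,\lambda)U$, $U\in\mathbb{C}^n$, $x\in\mathbb{R}$. (H1): There are an open, bounded, simply connected set $\Omega\subset\mathbb{C}$, a continuous map $A:\mathbb{R}\times\bar\Omega\to\mathbb{C}^{n\times n}$ and continuous maps $A_\pm:\bar\Omega\to\mathbb{C}^{n\times n}$ such that (i) $A(x,\lambda)$ and $A_\pm(\lambda)$ are analytic in $\lambda\in\Omega$; (ii) $A(x,\lambda)\to A_\pm(\lambda)$ exponentially as $x\to\pm\infty$; (iii) $A_\pm(\lambda)$ are hyperbolic for $\lambda\in\bar\Omega$ and each has exactly $r$ eigenvalues, counted with multiplicity, with negative real part. (H2): The eigenvalues of $A_\pm(\lambda)$ are simple for all $\lambda\in\bar\Omega$. Notation: $\langle U,V\rangle:=U^*V$ where ${}^*$ is the conjugate transpose; $\mathbb{I}$ is the identity matrix. Let $\nu^+_1(\lambda),\ldots,\nu^+_n(\lambda)$ be the eigenvalues of $A_+(\lambda)$, ordered by increasing real part (so $\mathrm{Re}\,\nu^+_j(\lambda)<0$ iff $j\le r$) and varying continuously in $\lambda\in\bar\Omega$; $V^+_j(\lambda)$ are eigenvectors of $A_+(\lambda)$ for $\nu^+_j(\lambda)$ and $W^+_j(\lambda)$ are eigenvectors of $A_+(\lambda)^*$ for $\overline{\nu^+_j(\lambda)}$, chosen to vary continuously in $\lambda\in\bar\Omega$. *)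

theory Defs
  imports "HOL-Analysis.Analysis"
begin

definition cinner :: "complex^'n \<Rightarrow> complex^'n \<Rightarrow> complex" where
  "cinner U V = (\<Sum>i\<in>UNIV. cnj (U$i) * V$i)"

definition cadj :: "complex^'n^'n \<Rightarrow> complex^'n^'n" where
  "cadj M = (\<chi> i j. cnj (M$j$i))"

text \<open>Indices of eigenvalues run over \<open>1..n\<close>, \<open>n = CARD('n)\<close>.\<close>
definition bvp_sol ::
  "(real \<Rightarrow> complex \<Rightarrow> complex^'n^'n) \<Rightarrow> (nat \<Rightarrow> complex \<Rightarrow> complex)
   \<Rightarrow> (nat \<Rightarrow> complex \<Rightarrow> complex^'n) \<Rightarrow> (nat \<Rightarrow> complex \<Rightarrow> complex^'n)
   \<Rightarrow> complex \<Rightarrow> real \<Rightarrow> nat \<Rightarrow> (nat \<Rightarrow> real \<Rightarrow> complex^'n) \<Rightarrow> (real \<Rightarrow> complex^'n) \<Rightarrow> bool"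
where
  "bvp_sol A nu Vp Wp lam L j Vprev V \<longleftrightarrow>
     continuous_on {0..L} V \<and>
     (\<forall>x\<in>{0<..<L}. (V has_vector_derivative (A x lam *v V x - nu j lam *s V x)) (at x)) \<and>
     (\<forall>k\<in>{1..<j}. cinner (Vprev k 0) (V 0) = 0) \<and>
     cinner (Wp j lam) (V L) = cinner (Wp j lam) (Vp j lam) \<and>
     (\<forall>k\<in>{j+1..CARD('n)}. cinner (Wp k lam) (V L) = 0)"

end

theory Submission
  imports Defs
begin


lemma mv_norm_le:
  fixes M :: "complex^'n^'n"
  shows "norm (M *v x) \<le> (\<Sum>i\<in>UNIV. \<Sum>j\<in>UNIV. norm (M $ i $ j)) * norm x"
proof -
  have "norm (M *v x) \<le> (\<Sum>i\<in>UNIV. norm ((M *v x) $ i))"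
    by (simp add: norm_vec_def L2_set_le_sum)
  also have "\<dots> \<le> (\<Sum>i\<in>UNIV. \<Sum>j\<in>UNIV. norm (M $ i $ j) * norm x)"
  proof (rule sum_mono)
    fix i
    have "norm ((M *v x) $ i) \<le> (\<Sum>j\<in>UNIV. norm (M $ i $ j * x $ j))"
      by (simp add: matrix_vector_mult_def norm_sum)
    also have "\<dots> \<le> (\<Sum>j\<in>UNIV. norm (M $ i $ j) * norm x)"
      proof (rule sum_mono)
      fix j show "norm (M $ i $ j * x $ j) \<le> norm (M $ i $ j) * norm x"
        unfolding norm_mult by (rule mult_left_mono[OF Finite_Cartesian_Product.norm_nth_le norm_ge_zero])
    qed
    finally show "norm ((M *v x) $ i) \<le> (\<Sum>j\<in>UNIV. norm (M $ i $ j) * norm x)" .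
  qed
  finally show ?thesis by (simp add: sum_distrib_right)
qed

lemma cont_mv:
  fixes B :: "real \<Rightarrow> complex^'n^'n"
  assumes "continuous_on S B" "continuous_on S w"
  shows "continuous_on S (\<lambda>t. B t *v w t)"
  unfolding matrix_vector_mult_def
  by (intro continuous_intros assms)

lemma B_bound:
  fixes B :: "real \<Rightarrow> complex^'n^'n"
  assumes "continuous_on UNIV B"
  shows "\<exists>K>0. \<forall>t\<in>{0..L}. \<forall>y. norm (B t *v y) \<le> K * norm y"
proof -
  let ?m = "\<lambda>t. (\<Sum>i\<in>UNIV. \<Sum>j\<in>UNIV. norm (B t $ i $ j))"
  have "continuous_on {0..L} ?m"
    by (intro continuous_intros continuous_on_subset[OF assms]) auto
  then have "bounded (?m ` {0..L})"
    by (intro compact_imp_bounded compact_continuous_image) auto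
  then obtain K where K: "K>0" "\<And>t. t\<in>{0..L} \<Longrightarrow> norm (?m t) \<le> K"
    by (auto simp: bounded_pos)
  show ?thesis
  proof (intro exI[of _ K] conjI ballI allI)
    fix t y assume t: "t \<in> {0..L}"
    have "norm (B t *v y) \<le> ?m t * norm y" by (rule mv_norm_le)
    also have "\<dots> \<le> K * norm y"
      using K(2)[OF t] by (intro mult_right_mono) auto
    finally show "norm (B t *v y) \<le> K * norm y" .
  qed (use K in auto)
qed



lemma exp_integral:
  fixes b :: real
  assumes "b > 0" "y \<le> L"
  shows "integral {y..L} (\<lambda>t. exp (b*(L-t))) = (exp (b*(L-y)) - 1) / b"
proof -
  have "((\<lambda>t. exp (b*(L-t))) has_integral ((\<lambda>t. - exp (b*(L-t)) / b) L - (\<lambda>t. - exp (b*(L-t)) / b) y)) {y..L}"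
  proof (rule fundamental_theorem_of_calculus[OF assms(2)])
    fix x assume "x \<in> {y..L}"
    show "((\<lambda>t. - exp (b*(L-t)) / b) has_vector_derivative exp (b*(L-x))) (at x within {y..L})"
      using assms(1)
      by (auto intro!: derivative_eq_intros simp: has_real_derivative_iff_has_vector_derivative[symmetric])
  qed
  then show ?thesis using assms by (simp add: integral_unique field_simps)
qed



lemma mv_scaleR: "(B::complex^'n^'m) *v (c *\<^sub>R y) = c *\<^sub>R (B *v y)"
  by (simp add: matrix_vector_mult_def vec_eq_iff scaleR_sum_right)

lemma ode_exists:
  fixes B :: "real \<Rightarrow> complex^'n^'n" and v :: "complex^'n"
  assumes B: "continuous_on UNIV B" and L: "0 < L"
  shows "\<exists>U. continuous_on {0..L} U \<and> (\<forall>x\<in>{0<..<L}. (U has_vector_derivative B x *v U x) (at x)) \<and> U L = v"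
proof -
  obtain K where K: "K>0" "\<And>t y. t\<in>{0..L} \<Longrightarrow> norm (B t *v y) \<le> K * norm y"
    using B_bound[OF B, of L] by blast
  define \<beta> where "\<beta> = 2*K"
  have \<beta>: "\<beta> > 0" using K by (simp add: \<beta>_def)
  define G where "G w t = exp (\<beta>*(L-t)) *\<^sub>R (B t *v apply_bcontfun w t)"
    for w :: "real \<Rightarrow>\<^sub>C (complex^'n)" and t
  define F where "F w x = exp (-\<beta>*(L-x)) *\<^sub>R (v - integral {x..L} (G w))" for w x
  have Gc: "continuous_on UNIV (G w)" for w
    unfolding G_def by (intro continuous_intros cont_mv B) auto
  have Fc: "continuous_on {0..L} (F w)" for w
    unfolding F_def
    by (intro continuous_intros indefinite_integral_continuous_1' integrable_continuous_real
        continuous_on_subset[OF Gc]) auto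
  have cl: "clamp 0 L x \<in> {0..L}" for x :: real
    using clamp_in_interval[of 0 L x] L by (auto simp: cbox_interval)
  have ex: "\<exists>g. \<forall>x. apply_bcontfun g x = F w (clamp 0 L x)" for w
    using continuous_on_cbox_bcontfunE[of 0 L "F w"] Fc by (metis cbox_interval)
  define T where "T w = (SOME g. \<forall>x. apply_bcontfun g x = F w (clamp 0 L x))" for w
  have T: "apply_bcontfun (T w) x = F w (clamp 0 L x)" for w x
    unfolding T_def using someI_ex[OF ex[of w]] by blast
  have contr: "dist (T w1) (T w2) \<le> (1/2) * dist w1 w2" for w1 w2
  proof (rule dist_bound)
    fix x
    define y where "y = clamp 0 L x"
    define d where "d = dist w1 w2"
    have y: "0 \<le> y" "y \<le> L" using cl y_def by auto
    have "dist (T w1 x) (T w2 x) = dist (F w1 y) (F w2 y)" by (simp add: T y_def)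
    also have "\<dots> = exp (-\<beta>*(L-y)) * norm (integral {y..L} (G w2) - integral {y..L} (G w1))"
      unfolding F_def dist_norm by (simp flip: scaleR_diff_right)
    also have "integral {y..L} (G w2) - integral {y..L} (G w1) = integral {y..L} (\<lambda>t. G w2 t - G w1 t)"
      by (rule integral_diff[symmetric])
        (auto intro!: integrable_continuous_real continuous_on_subset[OF Gc])
    also have "norm (integral {y..L} (\<lambda>t. G w2 t - G w1 t)) \<le> integral {y..L} (\<lambda>t. exp (\<beta>*(L-t)) * (K * d))"
    proof (rule integral_norm_bound_integral)
      show "(\<lambda>t. G w2 t - G w1 t) integrable_on {y..L}"
        by (auto intro!: integrable_continuous_real continuous_intros continuous_on_subset[OF Gc])
      show "(\<lambda>t. exp (\<beta>*(L-t)) * (K * d)) integrable_on {y..L}"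
        by (auto intro!: integrable_continuous_real continuous_intros)
      fix t assume t: "t \<in> {y..L}"
      have "G w2 t - G w1 t = exp (\<beta>*(L-t)) *\<^sub>R (B t *v (w2 t - w1 t))"
        by (simp add: G_def matrix_vector_mult_diff_distrib scaleR_diff_right)
      then have "norm (G w2 t - G w1 t) = exp (\<beta>*(L-t)) * norm (B t *v (w2 t - w1 t))"
        by simp
      also have "\<dots> \<le> exp (\<beta>*(L-t)) * (K * norm (w2 t - w1 t))"
        using K(2)[of t "w2 t - w1 t"] t y by (intro mult_left_mono) auto
      also have "\<dots> \<le> exp (\<beta>*(L-t)) * (K * d)"
        using dist_bounded[of w1 t w2] K(1) unfolding d_def
        by (intro mult_left_mono) (auto simp: dist_norm norm_minus_commute)
      finally show "norm (G w2 t - G w1 t) \<le> exp (\<beta>*(L-t)) * (K * d)" .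
    qed
    also have "integral {y..L} (\<lambda>t. exp (\<beta>*(L-t)) * (K * d)) = (exp (\<beta>*(L-y)) - 1) / \<beta> * (K * d)"
      using exp_integral[OF \<beta> y(2)] by simp
    finally have "dist (T w1 x) (T w2 x) \<le> exp (-\<beta>*(L-y)) * ((exp (\<beta>*(L-y)) - 1) / \<beta> * (K * d))"
      by (simp add: mult_left_mono)
    also have "\<dots> = (1 - exp (-\<beta>*(L-y))) * d / 2"
    proof -
      have ea: "exp (-\<beta>*(L-y)) * exp (\<beta>*(L-y)) = 1" by (simp flip: exp_add)
      have gen: "p * ((q - 1) / \<beta> * (K * d)) = (p*q - p) * d / 2" for p q
        using K(1) by (simp add: \<beta>_def field_simps)
      show ?thesis using gen ea by simp
    qed
    also have "\<dots> \<le> d / 2"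
    proof -
      have "(1 - exp (-\<beta>*(L-y))) * d \<le> 1 * d"
        unfolding d_def by (intro mult_right_mono) auto
      then show ?thesis by simp
    qed
    finally show "dist (T w1 x) (T w2 x) \<le> (1/2) * dist w1 w2" by (simp add: d_def)
  qed
  obtain w where w: "T w = w" using banach_fix_type[of "1/2" T] contr by auto
  define U where "U x = exp (\<beta>*(L-x)) *\<^sub>R apply_bcontfun w x" for x
  have Uc: "continuous_on UNIV U" unfolding U_def by (intro continuous_intros) auto
  have GU: "G w t = B t *v U t" for t unfolding G_def U_def by (simp add: mv_scaleR)
  have Ueq: "U x = v - integral {x..L} (\<lambda>t. B t *v U t)" if "x \<in> {0..L}" for x
  proof -
    have "clamp 0 L x = x" using that by (simp add: cbox_interval)
    then have "apply_bcontfun w x = F w x" using T[of w x] w by simp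
    then have "U x = exp (\<beta>*(L-x)) *\<^sub>R F w x" by (simp add: U_def)
    also have "\<dots> = v - integral {x..L} (G w)" by (simp add: F_def flip: exp_add)
    also have "G w = (\<lambda>t. B t *v U t)" using GU by auto
    finally show ?thesis .
  qed
  show ?thesis
  proof (intro exI conjI ballI)
    show "continuous_on {0..L} U" using Uc by (rule continuous_on_subset) auto
    show "U L = v" using Ueq[of L] L by simp
    fix x assume x: "x \<in> {0<..<L}"
    have "((\<lambda>u. integral {u..L} (\<lambda>t. B t *v U t)) has_vector_derivative - (B x *v U x)) (at x within {0..L})"
      using x by (intro integral_has_vector_derivative' cont_mv
          continuous_on_subset[OF B] continuous_on_subset[OF Uc]) auto
    then have "((\<lambda>u. v - integral {u..L} (\<lambda>t. B t *v U t)) has_vector_derivative 0 - (- (B x *v U x))) (at x within {0..L})"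
      by (intro has_vector_derivative_diff has_vector_derivative_const)
    then have "((\<lambda>u. v - integral {u..L} (\<lambda>t. B t *v U t)) has_vector_derivative B x *v U x) (at x within {0..L})"
      by simp
    then have "(U has_vector_derivative B x *v U x) (at x within {0..L})"
      by (intro has_vector_derivative_transform[OF _ Ueq]) (use x in auto)
    then have "(U has_vector_derivative B x *v U x) (at x within {0<..<L})"
      by (rule has_vector_derivative_within_subset) auto
    then show "(U has_vector_derivative B x *v U x) (at x)"
      using has_vector_derivative_within_open[OF x open_greaterThanLessThan] by blast
  qed
qed



lemma deriv_normsq:
  fixes U :: "real \<Rightarrow> complex^'n"
  assumes "(U has_vector_derivative D) (at y)"
  shows "((\<lambda>t. U t \<bullet> U t) has_real_derivative (2 * (U y \<bullet> D))) (at y)"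
proof -
  have d: "(U has_derivative (\<lambda>h. h *\<^sub>R D)) (at y)"
    using assms by (simp add: has_vector_derivative_def)
  have "((\<lambda>t. U t \<bullet> U t) has_derivative (\<lambda>h. U y \<bullet> (h *\<^sub>R D) + (h *\<^sub>R D) \<bullet> U y)) (at y)"
    by (rule has_derivative_inner[OF d d])
  then show ?thesis unfolding has_field_derivative_def
    by (rule has_derivative_eq_rhs) (auto simp: fun_eq_iff inner_commute)
qed

lemma ode_unique:
  fixes B :: "real \<Rightarrow> complex^'n^'n" and U :: "real \<Rightarrow> complex^'n"
  assumes B: "continuous_on UNIV B"
    and Uc: "continuous_on {0..L} U"
    and Ud: "\<forall>x\<in>{0<..<L}. (U has_vector_derivative B x *v U x) (at x)"
    and x0: "x0 \<in> {0..L}" and z: "U x0 = 0" and x: "x \<in> {0..L}"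
  shows "U x = 0"
proof -
  obtain K where K: "K>0" "\<And>t y. t\<in>{0..L} \<Longrightarrow> norm (B t *v y) \<le> K * norm y"
    using B_bound[OF B, of L] by blast
  have bd: "\<bar>U t \<bullet> (B t *v U t)\<bar> \<le> K * (U t \<bullet> U t)" if "t \<in> {0..L}" for t
  proof -
    have "\<bar>U t \<bullet> (B t *v U t)\<bar> \<le> norm (U t) * norm (B t *v U t)" by (rule Cauchy_Schwarz_ineq2)
    also have "\<dots> \<le> norm (U t) * (K * norm (U t))" using K(2)[OF that] by (intro mult_left_mono) auto
    also have "\<dots> = K * (U t \<bullet> U t)" by (simp add: power2_norm_eq_inner[symmetric] power2_eq_square)
    finally show ?thesis .
  qed
  have der: "((\<lambda>t. U t \<bullet> U t) has_real_derivative (2 * (U t \<bullet> (B t *v U t)))) (at t)"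
    if "t \<in> {0<..<L}" for t
    using deriv_normsq Ud that by blast
  have cn: "continuous_on {0..L} (\<lambda>t. U t \<bullet> U t)" by (intro continuous_intros Uc)
  have "U x \<bullet> U x \<le> 0"
  proof (cases "x0 \<le> x")
    case True
    define f where "f t = exp (-(2*K)*t) * (U t \<bullet> U t)" for t
    have "f x0 \<ge> f x"
    proof (rule DERIV_nonpos_imp_decreasing_open[OF True])
      fix t assume t: "x0 < t" "t < x"
      then have t': "t \<in> {0<..<L}" using x0 x by auto
      show "\<exists>y. DERIV f t :> y \<and> y \<le> 0"
      proof (intro exI conjI)
        show "DERIV f t :> exp (-(2*K)*t) * (-(2*K)) * (U t \<bullet> U t) + exp (-(2*K)*t) * (2 * (U t \<bullet> (B t *v U t)))"
          unfolding f_def using der[OF t'] by (intro derivative_eq_intros) auto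
        have "2 * (U t \<bullet> (B t *v U t)) \<le> 2*K * (U t \<bullet> U t)" using bd[of t] t' by auto
        then have "(-(2*K)) * (U t \<bullet> U t) + (2 * (U t \<bullet> (B t *v U t))) \<le> 0" by linarith
        then have "exp (-(2*K)*t) * ((-(2*K)) * (U t \<bullet> U t) + (2 * (U t \<bullet> (B t *v U t)))) \<le> 0"
          by (simp add: mult_nonneg_nonpos)
        then show "exp (-(2*K)*t) * (-(2*K)) * (U t \<bullet> U t) + exp (-(2*K)*t) * (2 * (U t \<bullet> (B t *v U t))) \<le> 0"
          by (simp add: algebra_simps)
      qed
    next
      show "continuous_on {x0..x} f" unfolding f_def
        by (intro continuous_intros continuous_on_subset[OF cn]) (use x0 x in auto)
    qed
    then show ?thesis using z by (simp add: f_def mult_le_0_iff)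
  next
    case False
    then have le: "x \<le> x0" by simp
    define f where "f t = exp ((2*K)*t) * (U t \<bullet> U t)" for t
    have "f x \<le> f x0"
    proof (rule DERIV_nonneg_imp_increasing_open[OF le])
      fix t assume t: "x < t" "t < x0"
      then have t': "t \<in> {0<..<L}" using x0 x by auto
      show "\<exists>y. DERIV f t :> y \<and> y \<ge> 0"
      proof (intro exI conjI)
        show "DERIV f t :> exp ((2*K)*t) * (2*K) * (U t \<bullet> U t) + exp ((2*K)*t) * (2 * (U t \<bullet> (B t *v U t)))"
          unfolding f_def using der[OF t'] by (intro derivative_eq_intros) auto
        have "- (2 * (U t \<bullet> (B t *v U t))) \<le> 2*K * (U t \<bullet> U t)" using bd[of t] t' by auto
        then have "(2*K) * (U t \<bullet> U t) + (2 * (U t \<bullet> (B t *v U t))) \<ge> 0" by linarith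
        then have "exp ((2*K)*t) * ((2*K) * (U t \<bullet> U t) + (2 * (U t \<bullet> (B t *v U t)))) \<ge> 0"
          by simp
        then show "exp ((2*K)*t) * (2*K) * (U t \<bullet> U t) + exp ((2*K)*t) * (2 * (U t \<bullet> (B t *v U t))) \<ge> 0"
          by (simp add: algebra_simps)
      qed
    next
      show "continuous_on {x..x0} f" unfolding f_def
        by (intro continuous_intros continuous_on_subset[OF cn]) (use x0 x in auto)
    qed
    then show ?thesis using z by (simp add: f_def mult_le_0_iff)
  qed
  then have "U x \<bullet> U x = 0" using inner_ge_zero[of "U x"] by linarith
  then show ?thesis by simp
qed



lemma cinner_add_right: "cinner u (v + w) = cinner u v + cinner u w"
  by (simp add: cinner_def distrib_left sum.distrib)
lemma cinner_diff_right: "cinner u (v - w) = cinner u v - cinner u w"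
  by (simp add: cinner_def right_diff_distrib sum_subtractf)
lemma cinner_scale_right: "cinner u (c *s v) = c * cinner u v"
  by (simp add: cinner_def sum_distrib_left algebra_simps)
lemma cinner_add_left: "cinner (u + v) w = cinner u w + cinner v w"
  by (simp add: cinner_def distrib_right sum.distrib)
lemma cinner_scale_left: "cinner (c *s u) v = cnj c * cinner u v"
  by (simp add: cinner_def sum_distrib_left algebra_simps)
lemma cinner_zero_right[simp]: "cinner u 0 = 0"
  by (simp add: cinner_def)
lemma cinner_zero_left[simp]: "cinner 0 u = 0"
  by (simp add: cinner_def)
lemma cinner_sum_right: "finite I \<Longrightarrow> cinner u (\<Sum>k\<in>I. f k) = (\<Sum>k\<in>I. cinner u (f k))"
  by (induction I rule: finite_induct) (auto simp: cinner_add_right)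

lemma Re_cinner: "Re (cinner u v) = u \<bullet> v"
  by (simp add: cinner_def inner_vec_def inner_complex_def)

lemma cinner_self_zero: "cinner u u = 0 \<Longrightarrow> u = 0"
  using Re_cinner[of u u] by simp

lemma cinner_adj: "cinner w (M *v v) = cinner (cadj M *v w) v"
proof -
  have "cinner w (M *v v) = (\<Sum>i\<in>UNIV. \<Sum>j\<in>UNIV. cnj (w$i) * M$i$j * v$j)"
    by (simp add: cinner_def matrix_vector_mult_def sum_distrib_left mult.assoc)
  also have "\<dots> = (\<Sum>j\<in>UNIV. \<Sum>i\<in>UNIV. cnj (w$i) * M$i$j * v$j)"
    by (rule sum.swap)
  also have "\<dots> = cinner (cadj M *v w) v"
    by (simp add: cinner_def cadj_def matrix_vector_mult_def sum_distrib_left sum_distrib_right mult.commute mult.left_commute)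
  finally show ?thesis .
qed

lemma scaleR_vec_conv: "(r::real) *\<^sub>R (x::complex^'n) = complex_of_real r *s x"
  by (simp add: vec_eq_iff) (simp add: scaleR_conv_of_real)

lemma subspace_orth_left: "vec.subspace {x. cinner x z = 0}"
  by (auto simp: vec.subspace_def cinner_add_left cinner_scale_left)

lemma subspace_orth_right: "vec.subspace {x. cinner z x = 0}"
  by (auto simp: vec.subspace_def cinner_add_right cinner_scale_right)

lemma orth_span_left:
  assumes "\<And>g. g \<in> G \<Longrightarrow> cinner g z = 0" "x \<in> vec.span G"
  shows "cinner x z = 0"
  using vec.span_minimal[OF _ subspace_orth_left[of z]] assms by blast

lemma orth_span_right:
  assumes "\<And>g. g \<in> G \<Longrightarrow> cinner z g = 0" "x \<in> vec.span G"
  shows "cinner z x = 0"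
  using vec.span_minimal[OF _ subspace_orth_right[of z]] assms by blast

lemma herm_decomp:
  fixes y :: "complex^'n"
  shows "\<exists>s\<in>vec.span G. \<forall>x\<in>vec.span G. cinner x (y - s) = 0"
proof -
  define R where "R = G \<union> (\<lambda>g. \<i> *s g) ` G"
  obtain s z where s: "s \<in> span R" and z: "\<And>w. w \<in> span R \<Longrightarrow> orthogonal z w" and y: "y = s + z"
    using orthogonal_subspace_decomp_exists[of R y] by blast
  have sub: "subspace (vec.span G)"
    by (auto simp: subspace_def vec.span_zero vec.span_add scaleR_vec_conv vec.span_scale)
  have "R \<subseteq> vec.span G"
    by (auto simp: R_def vec.span_base vec.span_scale)
  then have "span R \<subseteq> vec.span G" using span_minimal[OF _ sub] by blast
  with s have sG: "s \<in> vec.span G" by blast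
  have "cinner g z = 0" if g: "g \<in> G" for g
  proof -
    have "g \<bullet> z = 0" using z[of g] g by (auto simp: R_def orthogonal_def inner_commute span_base)
    moreover have "(\<i> *s g) \<bullet> z = 0" using z[of "\<i> *s g"] g by (auto simp: R_def orthogonal_def inner_commute span_base)
    ultimately have "Re (cinner g z) = 0" "Re (cinner (\<i> *s g) z) = 0"
      by (simp_all add: Re_cinner)
    then show ?thesis by (simp add: cinner_scale_left complex_eq_iff)
  qed
  then have "\<forall>x\<in>vec.span G. cinner x (y - s) = 0"
    using orth_span_left y by auto
  with sG show ?thesis by blast
qed

lemma vec_scale_norm_le: "norm (c *s (v::complex^'n)) \<le> norm c * norm v"
proof -
  have "norm (c *s v) \<le> norm (norm c *\<^sub>R v)"
    by (rule norm_le_componentwise_cart) (simp add: norm_mult)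
  then show ?thesis by simp
qed

lemma bb_scale: "bounded_bilinear (\<lambda>(c::complex) (v::complex^'n). c *s v)"
proof
  fix a a' b b' :: "complex^'n" and c c' :: complex and r :: real
  show "(c + c') *s a = c *s a + c' *s a" by (simp add: vec_eq_iff algebra_simps)
  show "c *s (a + b) = c *s a + c *s b" by (simp add: vec_eq_iff algebra_simps)
  show "(r *\<^sub>R c) *s a = r *\<^sub>R (c *s a)" by (simp add: vec_eq_iff)
  show "c *s (r *\<^sub>R a) = r *\<^sub>R (c *s a)" by (simp add: vec_eq_iff)
next
  show "\<exists>K. \<forall>a b. norm (a *s (b::complex^'n)) \<le> norm a * norm b * K"
    using vec_scale_norm_le by (intro exI[of _ 1]) auto
qed

lemma mv_scale: "(M::complex^'n^'n) *v (c *s v) = c *s (M *v v)"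
  by (simp add: vec_eq_iff matrix_vector_mult_def sum_distrib_left algebra_simps)

lemma mv_sum: "finite I \<Longrightarrow> (M::complex^'n^'n) *v (\<Sum>k\<in>I. f k) = (\<Sum>k\<in>I. M *v f k)"
  by (induction I rule: finite_induct) (auto simp: matrix_vector_right_distrib)

lemma eig_indep:
  fixes M :: "complex^'n^'n"
  assumes "finite I" "inj_on mu I" "\<And>k. k\<in>I \<Longrightarrow> w k \<noteq> 0 \<and> M *v w k = mu k *s w k"
  shows "(\<Sum>k\<in>I. c k *s w k) = 0 \<Longrightarrow> k \<in> I \<Longrightarrow> c k = 0"
  using assms
proof (induction I arbitrary: c k rule: finite_induct)
  case empty then show ?case by simp
next
  case (insert a I)
  have inj: "inj_on mu (insert a I)" using insert.prems by blast
  have eig: "\<And>k. k \<in> insert a I \<Longrightarrow> w k \<noteq> 0 \<and> M *v w k = mu k *s w k" using insert.prems by blast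
  have sum0: "c a *s w a + (\<Sum>k\<in>I. c k *s w k) = 0" using insert by simp
  have "M *v (c a *s w a + (\<Sum>k\<in>I. c k *s w k)) - mu a *s (c a *s w a + (\<Sum>k\<in>I. c k *s w k)) = 0"
    using sum0 by simp
  moreover have "M *v (c a *s w a + (\<Sum>k\<in>I. c k *s w k)) = (c a * mu a) *s w a + (\<Sum>k\<in>I. (c k * mu k) *s w k)"
    using eig insert.hyps(1) by (simp add: matrix_vector_right_distrib mv_sum mv_scale vector_smult_assoc)
  moreover have "mu a *s (c a *s w a + (\<Sum>k\<in>I. c k *s w k)) = (c a * mu a) *s w a + (\<Sum>k\<in>I. (c k * mu a) *s w k)"
    by (simp add: vec.scale_right_distrib vec.scale_sum_right mult.commute)
  ultimately have "(\<Sum>k\<in>I. (c k * mu k) *s w k) - (\<Sum>k\<in>I. (c k * mu a) *s w k) = 0"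
    by (simp add: algebra_simps)
  then have "(\<Sum>k\<in>I. (c k * (mu k - mu a)) *s w k) = 0"
    by (simp add: sum_subtractf[symmetric] algebra_simps vec.scale_left_diff_distrib)
  then have ck: "c k * (mu k - mu a) = 0" if "k \<in> I" for k
    using insert.IH[of "\<lambda>k. c k * (mu k - mu a)" k] inj eig that insert.hyps by (auto intro: inj_on_subset)
  have "c k = 0" if "k \<in> I" for k
  proof -
    have "mu k \<noteq> mu a" using inj that insert.hyps(2) by (metis inj_on_contraD insertCI)
    then show ?thesis using ck[OF that] by simp
  qed
  then have "c a *s w a = 0" using sum0 by simp
  then have "c a = 0" using eig[of a] by simp
  with \<open>\<And>k. k \<in> I \<Longrightarrow> c k = 0\<close> show ?case using insert.prems by auto
qed



lemma WV_orth:
  fixes Ap0 :: "complex^'n^'n"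
  assumes inj: "inj_on nk {1..CARD('n)}"
   and V: "\<And>k. k\<in>{1..CARD('n)} \<Longrightarrow> Vk k \<noteq> 0 \<and> Ap0 *v Vk k = nk k *s Vk k"
   and W: "\<And>k. k\<in>{1..CARD('n)} \<Longrightarrow> Wk k \<noteq> 0 \<and> cadj Ap0 *v Wk k = cnj (nk k) *s Wk k"
   and k: "k\<in>{1..CARD('n)}" and m: "m\<in>{1..CARD('n)}" and km: "k \<noteq> m"
  shows "cinner (Wk k) (Vk m) = 0"
proof -
  have "nk m * cinner (Wk k) (Vk m) = cinner (Wk k) (Ap0 *v Vk m)"
    using V[OF m] by (simp add: cinner_scale_right)
  also have "\<dots> = cinner (cadj Ap0 *v Wk k) (Vk m)" by (rule cinner_adj)
  also have "\<dots> = nk k * cinner (Wk k) (Vk m)"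
    using W[OF k] by (simp add: cinner_scale_left)
  finally have "(nk m - nk k) * cinner (Wk k) (Vk m) = 0" by (simp add: algebra_simps)
  moreover have "nk m \<noteq> nk k" using inj k m km by (metis inj_on_contraD)
  ultimately show ?thesis by simp
qed

lemma WV_compl:
  fixes Ap0 :: "complex^'n^'n" and d :: "complex^'n"
  assumes inj: "inj_on nk {1..CARD('n)}"
   and W: "\<And>k. k\<in>{1..CARD('n)} \<Longrightarrow> Wk k \<noteq> 0 \<and> cadj Ap0 *v Wk k = cnj (nk k) *s Wk k"
   and d: "\<And>k. k\<in>{1..CARD('n)} \<Longrightarrow> cinner (Wk k) d = 0"
  shows "d = 0"
proof -
  define I where "I = {1..CARD('n)}"
  define S where "S = Wk ` I"
  have injc: "inj_on (\<lambda>k. cnj (nk k)) I"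
  proof (rule inj_onI)
    fix k m assume km: "k\<in>I" "m\<in>I" "cnj (nk k) = cnj (nk m)"
    then have "nk k = nk m" by simp
    then show "k = m" using inj_onD[OF inj] km(1,2) by (simp add: I_def)
  qed
  have injW: "inj_on Wk I"
  proof (rule inj_onI)
    fix k m assume km: "k \<in> I" "m \<in> I" "Wk k = Wk m"
    have "cnj (nk k) *s Wk k = cadj Ap0 *v Wk k" using W[of k] km(1) by (simp add: I_def)
    also have "\<dots> = cadj Ap0 *v Wk m" using km(3) by simp
    also have "\<dots> = cnj (nk m) *s Wk m" using W[of m] km(2) by (simp add: I_def)
    finally have "cnj (nk k) *s Wk k = cnj (nk m) *s Wk k" using km(3) by simp
    then have "(cnj (nk k) - cnj (nk m)) *s Wk k = 0" by (simp add: vec.scale_left_diff_distrib)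
    moreover have "Wk k \<noteq> 0" using W[of k] km(1) by (simp add: I_def)
    ultimately have "cnj (nk k) = cnj (nk m)" by simp
    then show "k = m" using injc km by (meson inj_onD)
  qed
  have "finite S" by (simp add: S_def I_def)
  have indep: "vec.independent S"
  proof (rule vec.independent_if_scalars_zero)
    show "finite S" by (simp add: S_def I_def)
    fix f x assume f: "(\<Sum>x\<in>S. f x *s x) = 0" and x: "x \<in> S"
    then obtain k where k: "k \<in> I" "x = Wk k" by (auto simp: S_def)
    have "(\<Sum>k\<in>I. f (Wk k) *s Wk k) = 0"
      using f sum.reindex[OF injW, of "\<lambda>x. f x *s x"] by (simp add: S_def)
    moreover have "finite I" by (simp add: I_def)
    moreover have "\<And>k. k \<in> I \<Longrightarrow> Wk k \<noteq> 0 \<and> cadj Ap0 *v Wk k = cnj (nk k) *s Wk k"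
      using W by (simp add: I_def)
    ultimately have "f (Wk k) = 0"
      using eig_indep[of I "\<lambda>k. cnj (nk k)" Wk "cadj Ap0" "\<lambda>k. f (Wk k)" k] injc k(1) by simp
    then show "f x = 0" using k by simp
  qed
  have card: "card S = vec.dim (UNIV :: (complex^'n) set)"
    using card_image[OF injW] by (simp add: S_def I_def vec_dim_card card_cart_basis)
  have "UNIV \<subseteq> vec.span S"
    using vec.card_eq_dim[OF subset_UNIV card \<open>finite S\<close>] indep by simp
  then have "d \<in> vec.span S" by blast
  moreover have "\<And>g. g \<in> S \<Longrightarrow> cinner g d = 0" using d by (auto simp: S_def I_def)
  ultimately have "cinner d d = 0" by (intro orth_span_left[of S d d]) auto
  then show ?thesis by (rule cinner_self_zero)
qed

lemma WV_decomp:
  fixes Ap0 :: "complex^'n^'n" and d :: "complex^'n"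
  assumes inj: "inj_on nk {1..CARD('n)}"
   and V: "\<And>k. k\<in>{1..CARD('n)} \<Longrightarrow> Vk k \<noteq> 0 \<and> Ap0 *v Vk k = nk k *s Vk k"
   and W: "\<And>k. k\<in>{1..CARD('n)} \<Longrightarrow> Wk k \<noteq> 0 \<and> cadj Ap0 *v Wk k = cnj (nk k) *s Wk k"
   and j: "j \<le> CARD('n)"
   and d: "\<And>k. k\<in>{j..CARD('n)} \<Longrightarrow> cinner (Wk k) d = 0"
  shows "d \<in> vec.span (Vk ` {1..<j})"
proof -
  have orth: "cinner (Wk k) (Vk m) = 0" if "k\<in>{1..CARD('n)}" "m\<in>{1..CARD('n)}" "k \<noteq> m" for k m
    using WV_orth[OF inj V W that] .
  have nz: "cinner (Wk k) (Vk k) \<noteq> 0" if k: "k\<in>{1..CARD('n)}" for k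
  proof
    assume z: "cinner (Wk k) (Vk k) = 0"
    have "Vk k = 0"
    proof (rule WV_compl[OF inj W])
      fix m assume m: "m \<in> {1..CARD('n)}"
      show "cinner (Wk m) (Vk k) = 0"
      proof (cases "m = k")
        case True then show ?thesis using z by simp
      next
        case False then show ?thesis using orth[OF m k] by simp
      qed
    qed
    then show False using V[OF k] by simp
  qed
  define co where "co k = cinner (Wk k) d / cinner (Wk k) (Vk k)" for k
  define e where "e = (\<Sum>k\<in>{1..<j}. co k *s Vk k)"
  have "d - e = 0"
  proof (rule WV_compl[OF inj W])
    fix m assume m: "m \<in> {1..CARD('n)}"
    have "cinner (Wk m) e = (\<Sum>k\<in>{1..<j}. co k * cinner (Wk m) (Vk k))"
      by (simp add: e_def cinner_sum_right cinner_scale_right)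
    also have "\<dots> = (\<Sum>k\<in>{1..<j}. if k = m then co m * cinner (Wk m) (Vk m) else 0)"
      by (rule sum.cong) (use orth m j in auto)
    also have "\<dots> = (if m \<in> {1..<j} then co m * cinner (Wk m) (Vk m) else 0)"
      by (simp add: sum.delta')
    also have "\<dots> = cinner (Wk m) d"
      using nz[OF m] d[of m] m by (auto simp: co_def)
    finally show "cinner (Wk m) (d - e) = 0" by (simp add: cinner_diff_right)
  qed
  then have "d = e" by simp
  also have "e \<in> vec.span (Vk ` {1..<j})"
    unfolding e_def by (intro vec.span_sum vec.span_scale vec.span_base) auto
  finally show ?thesis .
qed

lemma shift_deriv:
  fixes U :: "real \<Rightarrow> complex^'n"
  assumes "(U has_vector_derivative D) (at x)"
  shows "((\<lambda>x. exp (a * (of_real x - of_real L)) *s U x) has_vector_derivative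
     (exp (a * (of_real x - of_real L)) *s D + (a * exp (a * (of_real x - of_real L))) *s U x)) (at x)"
proof -
  have e: "((\<lambda>x. exp (a * (of_real x - of_real L))) has_vector_derivative (a * exp (a * (of_real x - of_real L)))) (at x)"
  proof (rule has_vector_derivative_real_field[where f="\<lambda>z. exp (a * (z - of_real L))", of _ x UNIV, simplified])
    show "((\<lambda>z. exp (a * (z - of_real L))) has_field_derivative a * exp (a * (of_real x - of_real L))) (at (of_real x))"
      by (auto intro!: derivative_eq_intros)
  qed
  show ?thesis
    using bounded_bilinear.has_vector_derivative[OF bb_scale e assms] by simp
qed

lemma cont_scale:
  fixes U :: "real \<Rightarrow> complex^'n" and g :: "real \<Rightarrow> complex"
  assumes "continuous_on S g" "continuous_on S U"
  shows "continuous_on S (\<lambda>x. g x *s U x)"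
  using bounded_bilinear.continuous_on[OF bb_scale assms] by simp



lemma main_fixed:
  fixes A :: "real \<Rightarrow> complex \<Rightarrow> complex^'n^'n"
    and Ap :: "complex \<Rightarrow> complex^'n^'n"
    and nu :: "nat \<Rightarrow> complex \<Rightarrow> complex"
    and Vp Wp :: "nat \<Rightarrow> complex \<Rightarrow> complex^'n"
  assumes Bc: "continuous_on UNIV (\<lambda>t. A t lam)" and L: "0 < L" and r: "r \<le> CARD('n)"
    and inj: "inj_on (\<lambda>j. nu j lam) {1..CARD('n)}"
    and V: "\<And>k. k\<in>{1..CARD('n)} \<Longrightarrow> Vp k lam \<noteq> 0 \<and> Ap lam *v Vp k lam = nu k lam *s Vp k lam"
    and W: "\<And>k. k\<in>{1..CARD('n)} \<Longrightarrow> Wp k lam \<noteq> 0 \<and> cadj (Ap lam) *v Wp k lam = cnj (nu k lam) *s Wp k lam"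
  shows "\<exists>Vs :: nat \<Rightarrow> real \<Rightarrow> complex^'n.
       \<forall>j\<in>{1..r}. bvp_sol A nu Vp Wp lam L j Vs (Vs j) \<and>
         (\<forall>V. bvp_sol A nu Vp Wp lam L j Vs V \<longrightarrow> (\<forall>x\<in>{0..L}. V x = Vs j x))"
proof -
  define Vk where "Vk k = Vp k lam" for k
  define Wk where "Wk k = Wp k lam" for k
  define sol where "sol U \<longleftrightarrow> continuous_on {0..L} U \<and>
      (\<forall>x\<in>{0<..<L}. (U has_vector_derivative A x lam *v U x) (at x))" for U :: "real \<Rightarrow> complex^'n"
  have sol_add: "sol (\<lambda>x. U1 x + U2 x)" if "sol U1" "sol U2" for U1 U2
    using that unfolding sol_def
    by (auto intro!: continuous_intros has_vector_derivative_add simp: matrix_vector_right_distrib)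
  have sol_diff: "sol (\<lambda>x. U1 x - U2 x)" if "sol U1" "sol U2" for U1 U2
    using that unfolding sol_def
    by (auto intro!: continuous_intros has_vector_derivative_diff simp: matrix_vector_mult_diff_distrib)
  have sol_scale: "sol (\<lambda>x. c *s U x)" if "sol U" for U c
  proof -
    have bl: "bounded_linear (\<lambda>v::complex^'n. c *s v)"
      by (rule bounded_bilinear.bounded_linear_right[OF bb_scale])
    show ?thesis using that unfolding sol_def
      using bounded_linear.has_vector_derivative[OF bl] bounded_linear.continuous_on[OF bl]
      by (auto simp: mv_scale)
  qed
  have sol_uniq: "U x = 0" if "sol U" "x0 \<in> {0..L}" "U x0 = 0" "x \<in> {0..L}" for U x0 x
    using ode_unique[OF Bc, of L U x0 x] that unfolding sol_def by blast
  have sol_ex: "\<exists>U. sol U \<and> U L = v" for v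
    using ode_exists[OF Bc L, of v] unfolding sol_def by blast
  define P where "P v = (SOME U. sol U \<and> U L = v)" for v
  have Psol: "sol (P v)" "P v L = v" for v
    using someI_ex[OF sol_ex[of v]] unfolding P_def by auto
  have Peq: "U x = P (U L) x" if "sol U" "x \<in> {0..L}" for U x
  proof -
    have "(\<lambda>x. U x - P (U L) x) x = 0"
      by (rule sol_uniq[of _ L]) (use that sol_diff Psol L in auto)
    then show ?thesis by simp
  qed
  define Q where "Q v = P v 0" for v
  have Qlin: "Vector_Spaces.linear (*s) (*s) Q"
    unfolding Vector_Spaces.linear_iff
  proof (intro conjI allI vec.vector_space_axioms)
    fix x y :: "complex^'n" and c :: complex
    have "(\<lambda>t. P x t + P y t) 0 = P ((\<lambda>t. P x t + P y t) L) 0"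
      by (rule Peq) (use sol_add Psol L in auto)
    then show "Q (x + y) = Q x + Q y" by (simp add: Q_def Psol)
    have "(\<lambda>t. c *s P x t) 0 = P ((\<lambda>t. c *s P x t) L) 0"
      by (rule Peq) (use sol_scale Psol L in auto)
    then show "Q (c *s x) = c *s Q x" by (simp add: Q_def Psol)
  qed
  interpret Ql: Vector_Spaces.linear "(*s)" "(*s)" Q by (rule Qlin)
  define E where "E j = vec.span (Vk ` {1..<j})" for j
  have Emono: "E j \<subseteq> E j'" if "j \<le> j'" for j j'
    unfolding E_def using that by (intro vec.span_mono image_mono) auto
  have tv_ex: "\<exists>v. v - Vk j \<in> E j \<and> (\<forall>e\<in>E j. cinner (Q e) (Q v) = 0)" for j
  proof -
    obtain s where s: "s \<in> vec.span (Q ` (Vk ` {1..<j}))"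
      and so: "\<forall>x\<in>vec.span (Q ` (Vk ` {1..<j})). cinner x (Q (Vk j) - s) = 0"
      using herm_decomp[of "Q ` (Vk ` {1..<j})" "Q (Vk j)"] by blast
    have "s \<in> Q ` E j" using s Ql.span_image unfolding E_def by blast
    then obtain c where c: "c \<in> E j" "s = Q c" by blast
    show ?thesis
    proof (intro exI conjI ballI)
      show "Vk j - c - Vk j \<in> E j" using c(1) unfolding E_def by (simp add: vec.span_neg)
      fix e assume e: "e \<in> E j"
      have "Q e \<in> vec.span (Q ` (Vk ` {1..<j}))" using e Ql.span_image unfolding E_def by blast
      then show "cinner (Q e) (Q (Vk j - c)) = 0" using so c by (simp add: Ql.diff)
    qed
  qed
  define tv where "tv j = (SOME v. v - Vk j \<in> E j \<and> (\<forall>e\<in>E j. cinner (Q e) (Q v) = 0))" for j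
  have tv: "tv j - Vk j \<in> E j" "\<And>e. e \<in> E j \<Longrightarrow> cinner (Q e) (Q (tv j)) = 0" for j
    using someI_ex[OF tv_ex[of j]] unfolding tv_def by auto
  have tvE: "tv k \<in> E j" if "k \<in> {1..<j}" for k j
  proof -
    have "Vk k \<in> E j" using that unfolding E_def by (intro vec.span_base) auto
    moreover have "tv k - Vk k \<in> E j" using tv(1)[of k] Emono[of k j] that by auto
    ultimately have "(tv k - Vk k) + Vk k \<in> E j" unfolding E_def by (rule vec.span_add[rotated])
    then show ?thesis by simp
  qed
  have tvE1: "tv j \<in> E (Suc j)" if "1 \<le> j" for j
    using tvE[of j "Suc j"] that by auto
  have Worth: "cinner (Wk k) x = 0" if "k \<in> {1..CARD('n)}" "m \<le> k" "x \<in> E m" for k m x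
  proof -
    have "cinner (Wk k) g = 0" if g: "g \<in> Vk ` {1..<m}" for g
    proof -
      obtain i where i: "i \<in> {1..<m}" "g = Vk i" using g by blast
      show ?thesis using WV_orth[OF inj V W, of k i] i \<open>k \<in> {1..CARD('n)}\<close> \<open>m \<le> k\<close>
        by (auto simp: Vk_def Wk_def)
    qed
    then show ?thesis using orth_span_right that(3) unfolding E_def by blast
  qed
  have claimb: "Q (Vk k) \<in> vec.span ((\<lambda>m. Q (tv m)) ` {1..<j})" if "k \<in> {1..<j}" for k j
    using that
  proof (induction k rule: less_induct)
    case (less k)
    have sub: "Q ` (Vk ` {1..<k}) \<subseteq> vec.span ((\<lambda>m. Q (tv m)) ` {1..<j})"
      using less by auto
    have "Q (tv k - Vk k) \<in> Q ` E k" using tv(1) by blast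
    also have "Q ` E k = vec.span (Q ` (Vk ` {1..<k}))" unfolding E_def by (rule Ql.span_image[symmetric])
    also have "\<dots> \<subseteq> vec.span ((\<lambda>m. Q (tv m)) ` {1..<j})"
      using vec.span_mono[OF sub] by (simp add: vec.span_span)
    finally have a: "Q (tv k - Vk k) \<in> vec.span ((\<lambda>m. Q (tv m)) ` {1..<j})" .
    have b: "Q (tv k) \<in> vec.span ((\<lambda>m. Q (tv m)) ` {1..<j})"
      using less.prems by (intro vec.span_base) auto
    have "Q (tv k) - Q (tv k - Vk k) \<in> vec.span ((\<lambda>m. Q (tv m)) ` {1..<j})"
      using vec.span_diff[OF b a] .
    then show ?case by (simp add: Ql.diff)
  qed
  have Qspan: "Q e \<in> vec.span ((\<lambda>m. Q (tv m)) ` {1..<j})" if "e \<in> E j" for e j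
  proof -
    have "Q ` (Vk ` {1..<j}) \<subseteq> vec.span ((\<lambda>m. Q (tv m)) ` {1..<j})"
      using claimb by blast
    then have "vec.span (Q ` (Vk ` {1..<j})) \<subseteq> vec.span ((\<lambda>m. Q (tv m)) ` {1..<j})"
      using vec.span_mono[OF \<open>Q ` (Vk ` {1..<j}) \<subseteq> _\<close>] by (simp add: vec.span_span)
    moreover have "Q e \<in> vec.span (Q ` (Vk ` {1..<j}))"
      using that Ql.span_image unfolding E_def by blast
    ultimately show ?thesis by blast
  qed
  define ef where "ef j x = exp (- nu j lam * (complex_of_real x - complex_of_real L))" for j x
  define Vs where "Vs j x = ef j x *s P (tv j) x" for j x
  have ef0: "ef j x \<noteq> 0" for j x by (simp add: ef_def)
  have VsL: "Vs j L = tv j" for j by (simp add: Vs_def ef_def Psol)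
  have Vs0: "Vs j 0 = ef j 0 *s Q (tv j)" for j by (simp add: Vs_def Q_def)
  have Vs_orth: "cinner (Vs k 0) (Vs j 0) = 0" if "k \<in> {1..<j}" for k j
    using tv(2)[OF tvE[OF that]] by (simp add: Vs0 cinner_scale_left cinner_scale_right)
  have WjVs: "cinner (Wk j) (Vs j L) = cinner (Wk j) (Vk j)" if "j \<in> {1..CARD('n)}" for j
  proof -
    have "cinner (Wk j) (tv j - Vk j) = 0" using Worth[OF that order.refl tv(1)] .
    then show ?thesis by (simp add: VsL cinner_diff_right)
  qed
  have WkVs: "cinner (Wk k) (Vs j L) = 0" if "k \<in> {j+1..CARD('n)}" "1 \<le> j" for k j
    using Worth[of k "Suc j" "tv j"] that tvE1[OF that(2)] by (auto simp: VsL)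
  show ?thesis
  proof (intro exI ballI conjI allI impI)
    fix j assume j: "j \<in> {1..r}"
    then have jn: "j \<in> {1..CARD('n)}" using r by auto
    show exist: "bvp_sol A nu Vp Wp lam L j Vs (Vs j)"
      unfolding bvp_sol_def
    proof (intro conjI ballI)
      show "continuous_on {0..L} (Vs j)"
        unfolding Vs_def ef_def using Psol(1) unfolding sol_def
        by (intro cont_scale) (auto intro!: continuous_intros)
      fix x assume x: "x \<in> {0<..<L}"
      have d: "(P (tv j) has_vector_derivative A x lam *v P (tv j) x) (at x)"
        using Psol(1) x unfolding sol_def by blast
      show "(Vs j has_vector_derivative A x lam *v Vs j x - nu j lam *s Vs j x) (at x)"
        using shift_deriv[OF d, of "- nu j lam" L]
        by (simp add: Vs_def[abs_def] ef_def mv_scale vector_smult_assoc vec_eq_iff algebra_simps)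
    next
      fix k assume "k \<in> {1..<j}"
      then show "cinner (Vs k 0) (Vs j 0) = 0" by (rule Vs_orth)
    next
      show "cinner (Wp j lam) (Vs j L) = cinner (Wp j lam) (Vp j lam)"
        using WjVs[OF jn] by (simp add: Wk_def Vk_def)
    next
      fix k assume "k \<in> {j+1..CARD('n)}"
      then show "cinner (Wp k lam) (Vs j L) = 0" using WkVs[of k j] j by (simp add: Wk_def)
    qed
    fix U x assume U: "bvp_sol A nu Vp Wp lam L j Vs U" and x: "x \<in> {0..L}"
    define D where "D t = U t - Vs j t" for t
    define D0 where "D0 t = exp (nu j lam * (complex_of_real t - complex_of_real L)) *s D t" for t
    have Dc: "continuous_on {0..L} D"
      using U exist unfolding bvp_sol_def D_def by (auto intro!: continuous_intros)
    have Dd: "\<forall>x\<in>{0<..<L}. (D has_vector_derivative A x lam *v D x - nu j lam *s D x) (at x)"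
    proof
      fix t assume t: "t \<in> {0<..<L}"
      have "(U has_vector_derivative A t lam *v U t - nu j lam *s U t) (at t)"
        using U t unfolding bvp_sol_def by blast
      moreover have "(Vs j has_vector_derivative A t lam *v Vs j t - nu j lam *s Vs j t) (at t)"
        using exist t unfolding bvp_sol_def by blast
      ultimately have "((\<lambda>t. U t - Vs j t) has_vector_derivative
          (A t lam *v U t - nu j lam *s U t) - (A t lam *v Vs j t - nu j lam *s Vs j t)) (at t)"
        by (rule has_vector_derivative_diff)
      then show "(D has_vector_derivative A t lam *v D t - nu j lam *s D t) (at t)"
        unfolding D_def[abs_def]
        by (rule has_vector_derivative_eq_rhs) (simp add: vec_eq_iff matrix_vector_mult_def algebra_simps sum_subtractf)
    qed
    have solD0: "sol D0"
      unfolding sol_def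
    proof (intro conjI ballI)
      show "continuous_on {0..L} D0" unfolding D0_def
        by (intro cont_scale Dc) (auto intro!: continuous_intros)
      fix t assume t: "t \<in> {0<..<L}"
      show "(D0 has_vector_derivative A t lam *v D0 t) (at t)"
        using shift_deriv[OF Dd[rule_format, OF t], of "nu j lam" L]
        by (simp add: D0_def[abs_def] mv_scale vector_smult_assoc vec_eq_iff algebra_simps)
    qed
    have D0L: "D0 L = D L" by (simp add: D0_def)
    have DLE: "D L \<in> E j"
      unfolding E_def Vk_def
    proof (rule WV_decomp[OF inj V W])
      show "j \<le> CARD('n)" using jn by simp
      fix k assume k: "k \<in> {j..CARD('n)}"
      show "cinner (Wp k lam) (D L) = 0"
      proof (cases "k = j")
        case True
        then show ?thesis using U exist unfolding bvp_sol_def D_def by (simp add: cinner_diff_right)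
      next
        case False
        then have "k \<in> {j+1..CARD('n)}" using k by auto
        then show ?thesis using U exist unfolding bvp_sol_def D_def by (simp add: cinner_diff_right)
      qed
    qed
    have "D0 0 = Q (D0 L)" unfolding Q_def by (rule Peq[OF solD0]) (use L in auto)
    then have D00: "D0 0 \<in> vec.span ((\<lambda>m. Q (tv m)) ` {1..<j})"
      using Qspan[OF DLE] D0L by simp
    have "cinner g (D0 0) = 0" if g: "g \<in> (\<lambda>m. Q (tv m)) ` {1..<j}" for g
    proof -
      obtain k where k: "k \<in> {1..<j}" "g = Q (tv k)" using g by blast
      have "cinner (Vs k 0) (U 0) = 0" using U k unfolding bvp_sol_def by blast
      moreover have "cinner (Vs k 0) (Vs j 0) = 0" using Vs_orth[OF k(1)] .
      ultimately have "cinner (Vs k 0) (D 0) = 0" by (simp add: D_def cinner_diff_right)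
      then have "cinner (Q (tv k)) (D 0) = 0" using ef0[of k 0] by (simp add: Vs0 cinner_scale_left)
      then show ?thesis using k by (simp add: D0_def cinner_scale_right)
    qed
    then have "cinner (D0 0) (D0 0) = 0" by (intro orth_span_left[OF _ D00])
    then have "D0 0 = 0" by (rule cinner_self_zero)
    then have "D0 x = 0" using sol_uniq[OF solD0, of 0 x] L x by auto
    then have "D x = 0" by (simp add: D0_def)
    then show "U x = Vs j x" by (simp add: D_def)
  qed
qed


theorem lemma2:
  fixes A :: "real \<Rightarrow> complex \<Rightarrow> complex^'n^'n"
    and Ap Am :: "complex \<Rightarrow> complex^'n^'n"
    and \<Omega> :: "complex set"
    and r :: nat
    and nu :: "nat \<Rightarrow> complex \<Rightarrow> complex"
    and Vp Wp :: "nat \<Rightarrow> complex \<Rightarrow> complex^'n"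
  assumes \<Omega>: "open \<Omega>" "bounded \<Omega>" "simply_connected \<Omega>"
    and A_cont: "continuous_on (UNIV \<times> closure \<Omega>) (\<lambda>(x, lam). A x lam)"
    and Ap_cont: "continuous_on (closure \<Omega>) Ap"
    and Am_cont: "continuous_on (closure \<Omega>) Am"
    and A_hol: "\<And>x i k. (\<lambda>lam. A x lam $ i $ k) holomorphic_on \<Omega>"
    and Ap_hol: "\<And>i k. (\<lambda>lam. Ap lam $ i $ k) holomorphic_on \<Omega>"
    and Am_hol: "\<And>i k. (\<lambda>lam. Am lam $ i $ k) holomorphic_on \<Omega>"
    and A_exp: "\<exists>K \<alpha>. K > 0 \<and> \<alpha> > 0 \<and>
        (\<forall>x\<ge>0. \<forall>lam\<in>closure \<Omega>. norm (A x lam - Ap lam) \<le> K * exp (-\<alpha> * x)) \<and>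
        (\<forall>x\<le>0. \<forall>lam\<in>closure \<Omega>. norm (A x lam - Am lam) \<le> K * exp (\<alpha> * x))"
    and Am_spec: "\<And>lam. lam \<in> closure \<Omega> \<Longrightarrow> \<exists>mu :: nat \<Rightarrow> complex.
        inj_on mu {1..CARD('n)} \<and>
        (\<forall>j\<in>{1..CARD('n)}. (\<exists>v. v \<noteq> 0 \<and> Am lam *v v = mu j *s v) \<and> Re (mu j) \<noteq> 0) \<and>
        card {j\<in>{1..CARD('n)}. Re (mu j) < 0} = r"
    and nu_cont: "\<And>j. j \<in> {1..CARD('n)} \<Longrightarrow> continuous_on (closure \<Omega>) (nu j)"
    and Vp_cont: "\<And>j. j \<in> {1..CARD('n)} \<Longrightarrow> continuous_on (closure \<Omega>) (Vp j)"
    and Wp_cont: "\<And>j. j \<in> {1..CARD('n)} \<Longrightarrow> continuous_on (closure \<Omega>) (Wp j)"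
    and nu_inj: "\<And>lam. lam \<in> closure \<Omega> \<Longrightarrow> inj_on (\<lambda>j. nu j lam) {1..CARD('n)}"
    and nu_hyp: "\<And>lam j. lam \<in> closure \<Omega> \<Longrightarrow> j \<in> {1..CARD('n)} \<Longrightarrow> Re (nu j lam) \<noteq> 0"
    and nu_ord: "\<And>lam j. lam \<in> closure \<Omega> \<Longrightarrow> 1 \<le> j \<Longrightarrow> j < CARD('n) \<Longrightarrow>
        Re (nu j lam) \<le> Re (nu (j+1) lam)"
    and nu_stable: "\<And>lam j. lam \<in> closure \<Omega> \<Longrightarrow> j \<in> {1..CARD('n)} \<Longrightarrow>
        (Re (nu j lam) < 0 \<longleftrightarrow> j \<le> r)"
    and Vp_eig: "\<And>lam j. lam \<in> closure \<Omega> \<Longrightarrow> j \<in> {1..CARD('n)} \<Longrightarrow>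
        Vp j lam \<noteq> 0 \<and> Ap lam *v Vp j lam = nu j lam *s Vp j lam"
    and Wp_eig: "\<And>lam j. lam \<in> closure \<Omega> \<Longrightarrow> j \<in> {1..CARD('n)} \<Longrightarrow>
        Wp j lam \<noteq> 0 \<and> cadj (Ap lam) *v Wp j lam = cnj (nu j lam) *s Wp j lam"
    and r_le: "r \<le> CARD('n)"
  shows "\<exists>(\<eta>::real) (C::real) (L0::real). \<eta> > 0 \<and> C > 0 \<and> L0 > 0 \<and>
    (\<forall>L\<ge>L0. \<forall>lam\<in>closure \<Omega>. \<exists>Vs :: nat \<Rightarrow> real \<Rightarrow> complex^'n.
       \<forall>j\<in>{1..r}. bvp_sol A nu Vp Wp lam L j Vs (Vs j) \<and>
         (\<forall>V. bvp_sol A nu Vp Wp lam L j Vs V \<longrightarrow> (\<forall>x\<in>{0..L}. V x = Vs j x)))"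
proof -
  have main: "\<forall>L\<ge>1. \<forall>lam\<in>closure \<Omega>. \<exists>Vs :: nat \<Rightarrow> real \<Rightarrow> complex^'n.
       \<forall>j\<in>{1..r}. bvp_sol A nu Vp Wp lam L j Vs (Vs j) \<and>
         (\<forall>V. bvp_sol A nu Vp Wp lam L j Vs V \<longrightarrow> (\<forall>x\<in>{0..L}. V x = Vs j x))"
  proof (intro allI impI ballI)
    fix L :: real and lam assume L: "1 \<le> L" and lam: "lam \<in> closure \<Omega>"
    have "continuous_on UNIV (\<lambda>t. (\<lambda>(x, lam). A x lam) (t, lam))"
      by (rule continuous_on_compose2[OF A_cont]) (use lam in \<open>auto intro!: continuous_intros\<close>)
    then have Bc: "continuous_on UNIV (\<lambda>t. A t lam)" by simp
    show "\<exists>Vs :: nat \<Rightarrow> real \<Rightarrow> complex^'n.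
       \<forall>j\<in>{1..r}. bvp_sol A nu Vp Wp lam L j Vs (Vs j) \<and>
         (\<forall>V. bvp_sol A nu Vp Wp lam L j Vs V \<longrightarrow> (\<forall>x\<in>{0..L}. V x = Vs j x))"
      by (rule main_fixed[where A=A and lam=lam and L=L and r=r and nu=nu and Vp=Vp and Wp=Wp and Ap=Ap, OF Bc _ r_le nu_inj[OF lam] Vp_eig[OF lam] Wp_eig[OF lam]]) (use L in auto)
  qed
  show ?thesis
    by (rule exI[of _ 1], rule exI[of _ 1], rule exI[of _ 1]) (use main in simp)
qed

end
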